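(* Let $G$ be a finite non-abelian group. If there is a prime $p$ such that $G/Z(G)\cong C_p\times C_p$, then $G$ is induced regular.
   Context: For a finite group $G$, $C_G(x)$ denotes the centralizer of $x\in G$ and $Z(G)$ the center. The non-centralizer graph $\Upsilon_G$ is the simple graph with vertex set $G$ in which two distinct vertices $x,y$ are adjacent iff $C_G(x)\neq C_G(y)$; the induced non-centralizer graph $\Upsilon_{G\setminus Z(G)}$ is its induced subgraph on $G\setminus Z(G)$. $G$ is called induced regular if $\Upsilon_{G\setminus Z(G)}$ is a regular graph (all vertices have the same degree). *)

theory Defs
  imports "HOL-Algebra.Algebra"
begin

definition centralizer :: "('a, 'b) monoid_scheme \<Rightarrow> 'a \<Rightarrow> 'a set" where
  "centralizer G x = {y \<in> carrier G. x \<otimes>\<^bsub>G\<^esub> y = y \<otimes>\<^bsub>G\<^esub> x}"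

definition group_center :: "('a, 'b) monoid_scheme \<Rightarrow> 'a set" where
  "group_center G = {z \<in> carrier G. \<forall>y \<in> carrier G. z \<otimes>\<^bsub>G\<^esub> y = y \<otimes>\<^bsub>G\<^esub> z}"

definition noncent_adj :: "('a, 'b) monoid_scheme \<Rightarrow> 'a \<Rightarrow> 'a \<Rightarrow> bool" where
  "noncent_adj G x y \<longleftrightarrow> x \<noteq> y \<and> centralizer G x \<noteq> centralizer G y"

definition induced_noncent_degree :: "('a, 'b) monoid_scheme \<Rightarrow> 'a \<Rightarrow> nat" where
  "induced_noncent_degree G x =
     card {y \<in> carrier G - group_center G. noncent_adj G x y}"

definition induced_regular :: "('a, 'b) monoid_scheme \<Rightarrow> bool" where
  "induced_regular G \<longleftrightarrow>
     (\<forall>x \<in> carrier G - group_center G. \<forall>y \<in> carrier G - group_center G.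
        induced_noncent_degree G x = induced_noncent_degree G y)"

end

theory Submission
  imports Defs "HOL-Computational_Algebra.Primes"
begin

lemma comm_inv_lemma:
  fixes G (structure)
  assumes "group G" "a \<in> carrier G" "y \<in> carrier G" "a \<otimes> y = y \<otimes> a"
  shows "inv a \<otimes> y = y \<otimes> inv a"
proof -
  interpret group G by fact
  have "inv a \<otimes> y = inv a \<otimes> (y \<otimes> a) \<otimes> inv a" using assms(2,3) by (simp add: m_assoc)
  also have "\<dots> = inv a \<otimes> (a \<otimes> y) \<otimes> inv a" using assms(4) by simp
  also have "\<dots> = y \<otimes> inv a" using assms(2,3) by (simp add: m_assoc[symmetric])
  finally show ?thesis .
qed

lemma center_subgroup:
  fixes G (structure)
  assumes "group G" shows "subgroup (group_center G) G"
proof -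
  interpret group G by fact
  show ?thesis
  proof
    show "group_center G \<subseteq> carrier G" by (auto simp: group_center_def)
    show "\<one> \<in> group_center G" by (auto simp: group_center_def)
  next
    fix a b assume a: "a \<in> group_center G" and b: "b \<in> group_center G"
    have ac: "a \<in> carrier G" and bc: "b \<in> carrier G" using a b by (auto simp: group_center_def)
    show "a \<otimes> b \<in> group_center G"
      unfolding group_center_def
    proof (intro CollectI conjI ballI)
      show "a \<otimes> b \<in> carrier G" using ac bc by simp
      fix y assume y: "y \<in> carrier G"
      have ca: "a \<otimes> y = y \<otimes> a" and cb: "b \<otimes> y = y \<otimes> b" using a b y by (auto simp: group_center_def)
      have "a \<otimes> b \<otimes> y = a \<otimes> (b \<otimes> y)" using ac bc y by (simp add: m_assoc)
      also have "\<dots> = a \<otimes> (y \<otimes> b)" using cb by simp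
      also have "\<dots> = (a \<otimes> y) \<otimes> b" using ac bc y by (simp add: m_assoc)
      also have "\<dots> = (y \<otimes> a) \<otimes> b" using ca by simp
      also have "\<dots> = y \<otimes> (a \<otimes> b)" using ac bc y by (simp add: m_assoc)
      finally show "a \<otimes> b \<otimes> y = y \<otimes> (a \<otimes> b)" .
    qed
  next
    fix a assume a: "a \<in> group_center G"
    show "inv a \<in> group_center G"
      unfolding group_center_def
    proof (intro CollectI conjI ballI)
      show "inv a \<in> carrier G" using a by (auto simp: group_center_def)
      fix y assume y: "y \<in> carrier G"
      have ac: "a \<in> carrier G" and com: "a \<otimes> y = y \<otimes> a" using a y by (auto simp: group_center_def)
      show "inv a \<otimes> y = y \<otimes> inv a"
        by (rule comm_inv_lemma[OF is_group ac y com])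
    qed
  qed
qed

lemma centralizer_subgroup:
  fixes G (structure)
  assumes "group G" "x \<in> carrier G" shows "subgroup (centralizer G x) G"
proof -
  interpret group G by fact
  show ?thesis
  proof
    show "centralizer G x \<subseteq> carrier G" by (auto simp: centralizer_def)
    show "\<one> \<in> centralizer G x" using assms by (auto simp: centralizer_def)
  next
    fix a b assume "a \<in> centralizer G x" "b \<in> centralizer G x"
    then have ac: "a \<in> carrier G" and bc: "b \<in> carrier G" and ca: "x \<otimes> a = a \<otimes> x" and cb: "x \<otimes> b = b \<otimes> x"
      by (auto simp: centralizer_def)
    have xc: "x \<in> carrier G" by fact
    have "x \<otimes> (a \<otimes> b) = (x \<otimes> a) \<otimes> b" using ac bc xc by (simp add: m_assoc)
    also have "\<dots> = a \<otimes> (x \<otimes> b)" using ca ac bc xc by (simp add: m_assoc)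
    also have "\<dots> = (a \<otimes> b) \<otimes> x" using cb ac bc xc by (simp add: m_assoc)
    finally show "a \<otimes> b \<in> centralizer G x" using ac bc by (simp add: centralizer_def)
  next
    fix a assume a: "a \<in> centralizer G x"
    have ac: "a \<in> carrier G" and com: "x \<otimes> a = a \<otimes> x" using a by (auto simp: centralizer_def)
    have "x \<otimes> inv a = inv a \<otimes> x"
      using comm_inv_lemma[OF assms(1) ac assms(2) com[symmetric]] by simp
    then show "inv a \<in> centralizer G x" using ac by (auto simp: centralizer_def)
  qed
qed

lemma subgroup_card_dvd:
  assumes "group G" "finite (carrier G)" "subgroup H G" "subgroup K G" "H \<subseteq> K"
  shows "card H dvd card K"
proof -
  interpret group G by fact
  have "subgroup H (G\<lparr>carrier := K\<rparr>)" using subgroup_incl assms by blast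
  moreover have "group (G\<lparr>carrier := K\<rparr>)" using assms(4) subgroup.subgroup_is_group assms(1) by blast
  ultimately have "card (rcosets\<^bsub>G\<lparr>carrier := K\<rparr>\<^esub> H) * card H = order (G\<lparr>carrier := K\<rparr>)"
    using group.lagrange by blast
  moreover have "order (G\<lparr>carrier := K\<rparr>) = card K" by (simp add: order_def)
  ultimately show ?thesis by (metis dvd_triv_right)
qed

theorem proposition3p8:
  fixes G :: "('a, 'b) monoid_scheme" and p :: nat
  assumes "group G"
    and "finite (carrier G)"
    and "\<not> comm_group G"
    and "Factorial_Ring.prime p"
    and "G Mod (group_center G) \<cong> (integer_mod_group p \<times>\<times> integer_mod_group p)"
  shows "induced_regular G"
proof -
  interpret group G by fact
  define Z where "Z = group_center G"
  have fin: "finite (carrier G)" by fact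
  have p: "Factorial_Ring.prime p" by fact
  have p1: "p > 1" using p prime_gt_1_nat by blast
  have Zs: "subgroup Z G" unfolding Z_def using center_subgroup assms(1) by blast
  have Zsub: "Z \<subseteq> carrier G" using Zs subgroup.subset by blast
  have finZ: "finite Z" using Zsub fin finite_subset by blast
  have "card (carrier (G Mod Z)) = card (carrier (integer_mod_group p \<times>\<times> integer_mod_group p))"
    using iso_same_card assms(5) Z_def by blast
  also have "\<dots> = p * p" using p1 by (simp add: carrier_integer_mod_group card_cartesian_product)
  finally have rc: "card (rcosets\<^bsub>G\<^esub> Z) = p * p" by (simp add: FactGroup_def)
  have cardG: "card (carrier G) = p^2 * card Z"
    using lagrange[OF Zs] rc unfolding order_def by (simp add: power2_eq_square)
  have "\<one>\<^bsub>G\<^esub> \<in> Z" using Zs by (rule subgroup.one_closed)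
  hence Zpos: "card Z > 0" using finZ card_gt_0_iff by auto
  define C where "C x = centralizer G x" for x
  have Cs: "subgroup (C x) G" if "x \<in> carrier G" for x
    unfolding C_def using centralizer_subgroup[OF assms(1) that] .
  have ZC: "Z \<subseteq> C x" if "x \<in> carrier G" for x
    using that by (auto simp: Z_def C_def group_center_def centralizer_def)
  have xC: "x \<in> C x" if "x \<in> carrier G" for x using that by (auto simp: C_def centralizer_def)
  have finC: "finite (C x)" for x by (rule finite_subset[OF _ fin]) (auto simp: C_def centralizer_def)
  have cardC: "card (C x) = p * card Z" if x: "x \<in> carrier G - Z" for x
  proof -
    have xG: "x \<in> carrier G" using x by blast
    have "card Z dvd card (C x)" using subgroup_card_dvd[OF assms(1) fin Zs Cs[OF xG] ZC[OF xG]] .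
    then obtain m where m: "card (C x) = card Z * m" by blast
    have "card (C x) dvd card (carrier G)"
      using subgroup_card_dvd[OF assms(1) fin Cs[OF xG] subgroup_self subgroup.subset[OF Cs[OF xG]]] .
    hence "card Z * m dvd card Z * p^2" using m cardG by (simp add: mult.commute)
    hence "m dvd p^2" using Zpos by simp
    then obtain i where i: "i \<le> 2" "m = p^i" using divides_primepow_nat[OF p] by blast
    have "Z \<subset> C x" using ZC[OF xG] xC[OF xG] x by blast
    hence "card Z < card (C x)" using finC psubset_card_mono by blast
    hence "i \<noteq> 0" using m i by (cases "i = 0") auto
    moreover have "C x \<noteq> carrier G"
    proof
      assume "C x = carrier G"
      hence "x \<in> Z" using xG by (auto simp: C_def Z_def centralizer_def group_center_def)
      thus False using x by blast
    qed
    hence "C x \<subset> carrier G" using Cs[OF xG] subgroup.subset by blast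
    hence "card (C x) < card (carrier G)" using fin psubset_card_mono by blast
    hence "i \<noteq> 2" using m i cardG by (auto simp: mult.commute)
    ultimately have "i = 1" using i by auto
    thus ?thesis using m i by simp
  qed
  have Ceq: "C x = C y" if x: "x \<in> carrier G - Z" and y: "y \<in> carrier G - Z" and yx: "y \<in> C x" for x y
  proof -
    have xG: "x \<in> carrier G" and yG: "y \<in> carrier G" using x y by auto
    have xy: "x \<in> C y" using yx xG by (auto simp: C_def centralizer_def)
    define K where "K = C x \<inter> C y"
    have Ks: "subgroup K G" unfolding K_def using Cs xG yG subgroups_Inter_pair by blast
    have ZK: "Z \<subseteq> K" using ZC xG yG K_def by blast
    have big: "card K = card (C w)" if w: "w \<in> carrier G - Z" "K \<subseteq> C w" for w
    proof -
      have wG: "w \<in> carrier G" using w by blast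
      have "card Z dvd card K" using subgroup_card_dvd[OF assms(1) fin Zs Ks ZK] .
      then obtain m where m: "card K = card Z * m" by blast
      have "card K dvd card (C w)" using subgroup_card_dvd[OF assms(1) fin Ks Cs[OF wG] w(2)] .
      hence "card Z * m dvd card Z * p^1" using m cardC[OF w(1)] by (simp add: mult.commute)
      hence "m dvd p^1" using Zpos by simp
      then obtain i where i: "i \<le> 1" "m = p^i" using divides_primepow_nat[OF p] by blast
      have "Z \<subset> K" using ZK y yx xC[OF yG] K_def by blast
      hence "card Z < card K" using finC K_def finite_Int psubset_card_mono by metis
      hence "i \<noteq> 0" using m i by (cases "i = 0") auto
      hence "i = 1" using i by auto
      thus ?thesis using m i cardC[OF w(1)] by (simp add: mult.commute)
    qed
    have "K = C x" using big[OF x] K_def finC card_subset_eq by (metis Int_lower1)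
    moreover have "K = C y" using big[OF y] K_def finC card_subset_eq by (metis Int_lower2)
    ultimately show ?thesis by simp
  qed
  have deg: "induced_noncent_degree G x = card (carrier G) - p * card Z" if x: "x \<in> carrier G - Z" for x
  proof -
    have xG: "x \<in> carrier G" using x by blast
    have "{y \<in> carrier G - group_center G. noncent_adj G x y} = carrier G - C x"
    proof (intro equalityI subsetI)
      fix y assume "y \<in> {y \<in> carrier G - group_center G. noncent_adj G x y}"
      hence y: "y \<in> carrier G - Z" and ne: "C x \<noteq> C y"
        by (auto simp: Z_def noncent_adj_def C_def)
      show "y \<in> carrier G - C x" using Ceq[OF x y] ne y by blast
    next
      fix y assume y: "y \<in> carrier G - C x"
      hence yG: "y \<in> carrier G" and "y \<notin> Z" using ZC[OF xG] by auto
      moreover have "y \<noteq> x" using y xC[OF xG] by blast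
      moreover have "C x \<noteq> C y" using y xC[OF yG] by blast
      ultimately show "y \<in> {y \<in> carrier G - group_center G. noncent_adj G x y}"
        by (auto simp: Z_def noncent_adj_def C_def)
    qed
    hence "induced_noncent_degree G x = card (carrier G - C x)"
      by (simp add: induced_noncent_degree_def)
    also have "\<dots> = card (carrier G) - card (C x)"
      using card_Diff_subset finC Cs[OF xG] subgroup.subset by metis
    finally show ?thesis using cardC[OF x] by simp
  qed
  show ?thesis unfolding induced_regular_def using deg Z_def by simp
qed

end
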